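(* Let $\dot{\bm{Y}}\in\mathbb{Q}^{m\times n}$ with $m\ge n$, let $\lambda>0$, and let $\dot{\bm{Y}}=\dot{\bm{U}}\bm{\Sigma}_{\dot{\bm{Y}}}\dot{\bm{V}}^*$ be a quaternion SVD of $\dot{\bm{Y}}$, with $\dot{\bm{U}}\in\mathbb{Q}^{m\times m}$, $\dot{\bm{V}}\in\mathbb{Q}^{n\times n}$ unitary and singular values $\sigma_{\dot{\bm{Y}},1}\ge\dots\ge\sigma_{\dot{\bm{Y}},n}\ge0$ on the diagonal of $\bm{\Sigma}_{\dot{\bm{Y}}}$. Consider the problem $$\min_{\dot{\bm{X}}\in\mathbb{Q}^{m\times n}}\ \frac12\|\dot{\bm{Y}}-\dot{\bm{X}}\|_F^2+\lambda\frac{\|\dot{\bm{X}}\|_*}{\|\dot{\bm{X}}\|_F}.$$ A global optimum of this problem is given by $\dot{\bm{X}}=\dot{\bm{U}}\tilde{\bm{\Sigma}}_{\dot{\bm{X}}}\dot{\bm{V}}^*$, where $\tilde{\bm{\Sigma}}_{\dot{\bm{X}}}$ is the $m\times n$ nonnegative diagonal matrix with diagonal $\tilde{\bm{\sigma}}=(\tilde\sigma_{1},\dots,\tilde\sigma_{n})$, and $\tilde{\bm{\sigma}}$ is a solution of the real vector problem $$\min_{\bm{\sigma}\in\mathbb{R}^n}\ \frac12\|\bm{\sigma}_{\dot{\bm{Y}}}-\bm{\sigma}\|_2^2+\lambda\frac{\|\bm{\sigma}\|_1}{\|\bm{\sigma}\|_2}\quad\text{s.t.}\quad \sigma_1\ge\sigma_2\ge\dots\ge\sigma_n\ge0,$$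 with $\bm{\sigma}_{\dot{\bm{Y}}}=(\sigma_{\dot{\bm{Y}},1},\dots,\sigma_{\dot{\bm{Y}},n})$.
   Context: $\mathbb{Q}$ denotes the real quaternion algebra with basis $1,\bm{i},\bm{j},\bm{k}$. ${}^*$ denotes conjugate transpose; a quaternion SVD of $\dot{\bm{Y}}$ is a factorization $\dot{\bm{Y}}=\dot{\bm{U}}\bm{\Sigma}\dot{\bm{V}}^*$ with $\dot{\bm{U}},\dot{\bm{V}}$ unitary quaternion matrices and $\bm{\Sigma}$ real, nonnegative, diagonal with descending diagonal entries (the singular values). The nuclear norm $\|\dot{\bm{X}}\|_*$ is the sum of the singular values and $\|\dot{\bm{X}}\|_F=\sqrt{\sum_{i,j}|\dot x_{ij}|^2}$ (the $\ell_2$ norm of the singular values); the objective is considered for nonzero $\dot{\bm{X}}$ (and nonzero $\bm{\sigma}$ in the vector problem). *)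

theory Defs
  imports "HOL-Analysis.Analysis"
begin

datatype quat = Quat (qre: real) (qi: real) (qj: real) (qk: real)

lemma quat_eq_iff: "(q = r) \<longleftrightarrow> qre q = qre r \<and> qi q = qi r \<and> qj q = qj r \<and> qk q = qk r"
  by (cases q; cases r) auto

instantiation quat :: ring_1
begin
definition "0 = Quat 0 0 0 0"
definition "1 = Quat 1 0 0 0"
definition "p + q = Quat (qre p + qre q) (qi p + qi q) (qj p + qj q) (qk p + qk q)"
definition "p - q = Quat (qre p - qre q) (qi p - qi q) (qj p - qj q) (qk p - qk q)"
definition "- q = Quat (- qre q) (- qi q) (- qj q) (- qk q)"
definition "p * q = Quat
   (qre p * qre q - qi p * qi q - qj p * qj q - qk p * qk q)
   (qre p * qi q + qi p * qre q + qj p * qk q - qk p * qj q)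
   (qre p * qj q - qi p * qk q + qj p * qre q + qk p * qi q)
   (qre p * qk q + qi p * qj q - qj p * qi q + qk p * qre q)"
instance
  by intro_classes
     (simp_all add: quat_eq_iff zero_quat_def one_quat_def plus_quat_def minus_quat_def
        uminus_quat_def times_quat_def algebra_simps)
end

definition qcnj :: "quat \<Rightarrow> quat" where
  "qcnj q = Quat (qre q) (- qi q) (- qj q) (- qk q)"

definition qnorm2 :: "quat \<Rightarrow> real" where
  "qnorm2 q = (qre q)\<^sup>2 + (qi q)\<^sup>2 + (qj q)\<^sup>2 + (qk q)\<^sup>2"

definition qreal :: "real \<Rightarrow> quat" where
  "qreal r = Quat r 0 0 0"

text \<open>A quaternion matrix is a function on indices; an m x n matrix has entries
  at (i,j) with i<m, j<n and is zero elsewhere.\<close>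
type_synonym qmat = "nat \<Rightarrow> nat \<Rightarrow> quat"

definition qmats :: "nat \<Rightarrow> nat \<Rightarrow> qmat set" where
  "qmats m n = {A. \<forall>i j. \<not> (i < m \<and> j < n) \<longrightarrow> A i j = 0}"

definition qmult :: "nat \<Rightarrow> qmat \<Rightarrow> qmat \<Rightarrow> qmat" where
  "qmult k A B = (\<lambda>i j. \<Sum>l<k. A i l * B l j)"

definition qadj :: "qmat \<Rightarrow> qmat" where
  "qadj A = (\<lambda>i j. qcnj (A j i))"

definition qident :: "nat \<Rightarrow> qmat" where
  "qident n = (\<lambda>i j. if i = j \<and> i < n then 1 else 0)"

definition qunitary :: "nat \<Rightarrow> qmat \<Rightarrow> bool" where
  "qunitary n U \<longleftrightarrow> U \<in> qmats n n \<and> qmult n (qadj U) U = qident n \<and> qmult n U (qadj U) = qident n"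

definition qdiag :: "nat \<Rightarrow> nat \<Rightarrow> (nat \<Rightarrow> real) \<Rightarrow> qmat" where
  "qdiag m n s = (\<lambda>i j. if i = j \<and> i < m \<and> j < n then qreal (s i) else 0)"

definition is_qsvd :: "nat \<Rightarrow> nat \<Rightarrow> qmat \<Rightarrow> qmat \<Rightarrow> (nat \<Rightarrow> real) \<Rightarrow> qmat \<Rightarrow> bool" where
  "is_qsvd m n Y U s V \<longleftrightarrow>
     qunitary m U \<and> qunitary n V \<and>
     (\<forall>i < min m n. 0 \<le> s i) \<and>
     (\<forall>i j. i \<le> j \<and> j < min m n \<longrightarrow> s j \<le> s i) \<and>
     (\<forall>i \<ge> min m n. s i = 0) \<and>
     Y = qmult n (qmult m U (qdiag m n s)) (qadj V)"

definition qsingvals :: "nat \<Rightarrow> nat \<Rightarrow> qmat \<Rightarrow> nat \<Rightarrow> real" where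
  "qsingvals m n X = (SOME s. \<exists>U V. is_qsvd m n X U s V)"

definition qnuc_norm :: "nat \<Rightarrow> nat \<Rightarrow> qmat \<Rightarrow> real" where
  "qnuc_norm m n X = (\<Sum>i < min m n. qsingvals m n X i)"

definition qfro_norm :: "nat \<Rightarrow> nat \<Rightarrow> qmat \<Rightarrow> real" where
  "qfro_norm m n X = sqrt (\<Sum>i<m. \<Sum>j<n. qnorm2 (X i j))"

definition qmat_diff :: "qmat \<Rightarrow> qmat \<Rightarrow> qmat" where
  "qmat_diff A B = (\<lambda>i j. A i j - B i j)"

definition mat_obj :: "nat \<Rightarrow> nat \<Rightarrow> real \<Rightarrow> qmat \<Rightarrow> qmat \<Rightarrow> real" where
  "mat_obj m n lam Y X = (qfro_norm m n (qmat_diff Y X))\<^sup>2 / 2 + lam * qnuc_norm m n X / qfro_norm m n X"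

definition vec_obj :: "nat \<Rightarrow> real \<Rightarrow> (nat \<Rightarrow> real) \<Rightarrow> (nat \<Rightarrow> real) \<Rightarrow> real" where
  "vec_obj n lam sY s = (\<Sum>i<n. (sY i - s i)\<^sup>2) / 2
     + lam * (\<Sum>i<n. \<bar>s i\<bar>) / sqrt (\<Sum>i<n. (s i)\<^sup>2)"

definition vec_feasible :: "nat \<Rightarrow> (nat \<Rightarrow> real) \<Rightarrow> bool" where
  "vec_feasible n s \<longleftrightarrow> (\<forall>i j. i \<le> j \<and> j < n \<longrightarrow> s j \<le> s i) \<and> (\<forall>i<n. 0 \<le> s i)
     \<and> (\<exists>i<n. s i \<noteq> 0)"

end

theory Submission
  imports Defs
begin

section \<open>Quaternion basics\<close>

lemma quat_comps [simp]:
  "qre 0 = 0" "qi 0 = 0" "qj 0 = 0" "qk 0 = 0"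
  "qre 1 = 1" "qi 1 = 0" "qj 1 = 0" "qk 1 = 0"
  "qre (p + q) = qre p + qre q" "qi (p + q) = qi p + qi q"
  "qj (p + q) = qj p + qj q" "qk (p + q) = qk p + qk q"
  "qre (p - q) = qre p - qre q" "qi (p - q) = qi p - qi q"
  "qj (p - q) = qj p - qj q" "qk (p - q) = qk p - qk q"
  "qre (- q) = - qre q" "qi (- q) = - qi q" "qj (- q) = - qj q" "qk (- q) = - qk q"
  "qre (qcnj q) = qre q" "qi (qcnj q) = - qi q" "qj (qcnj q) = - qj q" "qk (qcnj q) = - qk q"
  "qre (qreal r) = r" "qi (qreal r) = 0" "qj (qreal r) = 0" "qk (qreal r) = 0"
  by (simp_all add: zero_quat_def one_quat_def plus_quat_def minus_quat_def uminus_quat_def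
      qcnj_def qreal_def)

lemma quat_mult_comps:
  "qre (p * q) = qre p * qre q - qi p * qi q - qj p * qj q - qk p * qk q"
  "qi (p * q) = qre p * qi q + qi p * qre q + qj p * qk q - qk p * qj q"
  "qj (p * q) = qre p * qj q - qi p * qk q + qj p * qre q + qk p * qi q"
  "qk (p * q) = qre p * qk q + qi p * qj q - qj p * qi q + qk p * qre q"
  by (simp_all add: times_quat_def)

lemma quat_sum_comps [simp]:
  "qre (sum f A) = (\<Sum>x\<in>A. qre (f x))" "qi (sum f A) = (\<Sum>x\<in>A. qi (f x))"
  "qj (sum f A) = (\<Sum>x\<in>A. qj (f x))" "qk (sum f A) = (\<Sum>x\<in>A. qk (f x))"
  by (induction A rule: infinite_finite_induct; simp)+

lemma qre_commute: "qre (p * q) = qre (q * p)"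
  by (simp add: quat_mult_comps algebra_simps)

lemma qcnj_mult: "qcnj (p * q) = qcnj q * qcnj p"
  by (simp add: quat_eq_iff quat_mult_comps algebra_simps)

lemma qcnj_simps [simp]:
  "qcnj (qcnj p) = p" "qcnj (p + q) = qcnj p + qcnj q" "qcnj (p - q) = qcnj p - qcnj q"
  "qcnj (- q) = - qcnj q" "qcnj 0 = 0" "qcnj 1 = 1" "qcnj (qreal r) = qreal r"
  "qcnj (sum f A) = (\<Sum>x\<in>A. qcnj (f x))"
  by (simp_all add: quat_eq_iff sum_negf)

lemma qcnj_eq_0_iff [simp]: "qcnj p = 0 \<longleftrightarrow> p = 0"
  by (simp add: quat_eq_iff)

lemma qreal_simps [simp]:
  "qreal 0 = 0" "qreal 1 = 1" "qreal (a + b) = qreal a + qreal b"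
  "qreal (a * b) = qreal a * qreal b" "qreal (- a) = - qreal a" "qreal (a - b) = qreal a - qreal b"
  by (simp_all add: quat_eq_iff quat_mult_comps)

lemma qreal_sum: "qreal (sum f A) = (\<Sum>x\<in>A. qreal (f x))"
  by (simp add: quat_eq_iff)

lemma qreal_eq_iff [simp]: "qreal a = qreal b \<longleftrightarrow> a = b"
  by (simp add: quat_eq_iff)

lemma qreal_commute: "qreal r * p = p * qreal r"
  by (simp add: quat_eq_iff quat_mult_comps algebra_simps)

lemma qnorm2_nonneg [simp]: "0 \<le> qnorm2 p"
  by (simp add: qnorm2_def)

lemma qnorm2_eq_0 [simp]: "qnorm2 p = 0 \<longleftrightarrow> p = 0"
  by (simp add: qnorm2_def quat_eq_iff add_nonneg_eq_0_iff)

lemma qcnj_mult_self: "qcnj p * p = qreal (qnorm2 p)"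
  by (simp add: quat_eq_iff quat_mult_comps qnorm2_def algebra_simps power2_eq_square)

lemma mult_qcnj_self: "p * qcnj p = qreal (qnorm2 p)"
  by (simp add: quat_eq_iff quat_mult_comps qnorm2_def algebra_simps power2_eq_square)

lemma qre_qcnj_self: "qre (qcnj p * p) = qnorm2 p"
  by (simp add: qcnj_mult_self)

lemma qnorm2_mult: "qnorm2 (p * q) = qnorm2 p * qnorm2 q"
  by (simp add: quat_mult_comps qnorm2_def power2_eq_square algebra_simps)

lemma qnorm2_qcnj [simp]: "qnorm2 (qcnj p) = qnorm2 p"
  by (simp add: qnorm2_def)

lemma qnorm2_qreal [simp]: "qnorm2 (qreal r) = r\<^sup>2"
  by (simp add: qnorm2_def)

lemma qnorm2_1 [simp]: "qnorm2 1 = 1" and qnorm2_0 [simp]: "qnorm2 0 = 0"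
  by (simp_all add: qnorm2_def)

lemma qre_cnj_le: "2 * qre (qcnj a * b) \<le> qnorm2 a + qnorm2 b"
proof -
  have "0 \<le> qnorm2 (a - b)" by simp
  then show ?thesis by (simp add: quat_mult_comps qnorm2_def power2_eq_square algebra_simps)
qed

lemma qnorm2_diff: "qnorm2 (a - b) = qnorm2 a + qnorm2 b - 2 * qre (qcnj a * b)"
  by (simp add: quat_mult_comps qnorm2_def power2_eq_square algebra_simps)

lemma qre_mult_qreal: "qre (qreal r * p) = r * qre p" "qre (p * qreal r) = qre p * r"
  by (simp_all add: quat_mult_comps)

lemma qreal_mult_eq: "qreal r * p = Quat (r * qre p) (r * qi p) (r * qj p) (r * qk p)"
  by (simp add: quat_eq_iff quat_mult_comps)

lemma qreal_inv_mult: "r \<noteq> 0 \<Longrightarrow> qreal (1/r) * (qreal r * p) = p"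
  by (simp add: quat_eq_iff quat_mult_comps)

lemma qre_qcnj_mult: "qre (qcnj a * b) = qre (qcnj b * a)"
  by (simp add: quat_mult_comps algebra_simps)



section \<open>Matrix algebra\<close>

lemma qmult_assoc: "qmult k (qmult l A B) C = qmult l A (qmult k B C)"
  unfolding qmult_def
  by (auto simp: sum_distrib_left sum_distrib_right mult.assoc intro!: ext sum.swap)

lemma qadj_qmult: "qadj (qmult k A B) = qmult k (qadj B) (qadj A)"
  unfolding qmult_def qadj_def by (auto simp: qcnj_mult intro!: ext)

lemma qadj_qadj [simp]: "qadj (qadj A) = A"
  unfolding qadj_def by simp

lemma qmats_def2: "A \<in> qmats m n \<longleftrightarrow> (\<forall>i j. (m \<le> i \<or> n \<le> j) \<longrightarrow> A i j = 0)"
  unfolding qmats_def by auto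

lemma qmatsD: "A \<in> qmats m n \<Longrightarrow> m \<le> i \<or> n \<le> j \<Longrightarrow> A i j = 0"
  unfolding qmats_def2 by blast

lemma qmult_ident_right: "A \<in> qmats p n \<Longrightarrow> qmult n A (qident n) = A"
  unfolding qmult_def qident_def
  by (auto intro!: ext simp: qmatsD if_distrib[where f="\<lambda>x. _ * x"] sum.delta cong: if_cong)

lemma qmult_ident_left: "A \<in> qmats m p \<Longrightarrow> qmult m (qident m) A = A"
proof (intro ext)
  fix i j assume "A \<in> qmats m p"
  then show "qmult m (qident m) A i j = A i j"
    unfolding qmult_def qident_def
    by (cases "i < m") (auto simp: qmatsD if_distrib[where f="\<lambda>x. x * _"] sum.delta' cong: if_cong)
qed

lemma qmult_qmats: "A \<in> qmats m k \<Longrightarrow> B \<in> qmats k n \<Longrightarrow> qmult k A B \<in> qmats m n"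
  unfolding qmats_def2 qmult_def by (auto simp: qmatsD)

lemma qadj_qmats: "A \<in> qmats m n \<Longrightarrow> qadj A \<in> qmats n m"
  unfolding qmats_def2 qadj_def by (auto simp: qmatsD)

lemma qident_qmats [simp]: "qident n \<in> qmats n n"
  unfolding qmats_def qident_def by auto

lemma qdiag_qmats [simp]: "qdiag m n s \<in> qmats m n"
  unfolding qmats_def qdiag_def by auto

lemma qadj_qdiag [simp]: "qadj (qdiag m n s) = qdiag n m s"
  unfolding qadj_def qdiag_def by (auto intro!: ext)

lemma qadj_qident [simp]: "qadj (qident n) = qident n"
  unfolding qadj_def qident_def by (auto intro!: ext)

lemma qmult_qdiag_left:
  "qmult k (qdiag p k s) A i j = (if i < min p k then qreal (s i) * A i j else 0)"
  unfolding qmult_def qdiag_def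
  by (auto simp: if_distrib[where f="\<lambda>x. x * _"] sum.delta cong: if_cong)

lemma qmult_qdiag_right:
  "qmult k A (qdiag k q s) i j = (if j < min k q then A i j * qreal (s j) else 0)"
  unfolding qmult_def qdiag_def
  by (auto simp: if_distrib[where f="\<lambda>x. _ * x"] sum.delta' cong: if_cong)

lemma qunitary_qmats: "qunitary n U \<Longrightarrow> U \<in> qmats n n"
  unfolding qunitary_def by blast

lemma qunitary_ident [simp]: "qunitary n (qident n)"
  unfolding qunitary_def by (simp add: qmult_ident_left[OF qident_qmats])

lemma qunitary_adj: "qunitary n U \<Longrightarrow> qunitary n (qadj U)"
  unfolding qunitary_def by (simp add: qadj_qmats)

lemma qunitary_mult:
  assumes "qunitary n A" "qunitary n B"
  shows "qunitary n (qmult n A B)"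
proof -
  have A: "A \<in> qmats n n" "qmult n (qadj A) A = qident n" "qmult n A (qadj A) = qident n"
    and B: "B \<in> qmats n n" "qmult n (qadj B) B = qident n" "qmult n B (qadj B) = qident n"
    using assms unfolding qunitary_def by auto
  have "qmult n (qadj (qmult n A B)) (qmult n A B) = qmult n (qadj B) (qmult n (qmult n (qadj A) A) B)"
    by (simp add: qadj_qmult qmult_assoc)
  also have "\<dots> = qident n" using A B by (simp add: qmult_ident_left[OF B(1)])
  finally have 1: "qmult n (qadj (qmult n A B)) (qmult n A B) = qident n" .
  have "qmult n (qmult n A B) (qadj (qmult n A B)) = qmult n A (qmult n (qmult n B (qadj B)) (qadj A))"
    by (simp add: qadj_qmult qmult_assoc)
  also have "\<dots> = qident n" using A B by (simp add: qmult_ident_left[OF qadj_qmats[OF A(1)]])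
  finally have 2: "qmult n (qmult n A B) (qadj (qmult n A B)) = qident n" .
  show ?thesis using 1 2 A B unfolding qunitary_def by (simp add: qmult_qmats)
qed

lemma qunitary_col:
  assumes "qunitary n U" "j < n"
  shows "(\<Sum>i<n. qnorm2 (U i j)) = 1"
proof -
  have "qmult n (qadj U) U j j = qident n j j" using assms unfolding qunitary_def by simp
  then have "qreal (\<Sum>i<n. qnorm2 (U i j)) = 1"
    using assms(2) by (simp add: qmult_def qadj_def qident_def qcnj_mult_self qreal_sum)
  then show ?thesis by (metis qreal_eq_iff qreal_simps(2))
qed

lemma qunitary_row:
  assumes "qunitary n U" "i < n"
  shows "(\<Sum>j<n. qnorm2 (U i j)) = 1"
proof -
  have "qmult n U (qadj U) i i = qident n i i" using assms unfolding qunitary_def by simp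
  then have "qreal (\<Sum>j<n. qnorm2 (U i j)) = 1"
    using assms(2) by (simp add: qmult_def qadj_def qident_def mult_qcnj_self qreal_sum)
  then show ?thesis by (metis qreal_eq_iff qreal_simps(2))
qed

definition rtr :: "nat \<Rightarrow> qmat \<Rightarrow> real" where
  "rtr k A = (\<Sum>i<k. qre (A i i))"

lemma rtr_comm: "rtr k (qmult l A B) = rtr l (qmult k B A)"
  unfolding rtr_def qmult_def
  by (simp add: qre_commute[of "A _ _"]) (rule sum.swap)

definition fip :: "nat \<Rightarrow> nat \<Rightarrow> qmat \<Rightarrow> qmat \<Rightarrow> real" where
  "fip m n A B = (\<Sum>i<m. \<Sum>j<n. qre (qcnj (A i j) * B i j))"

lemma fip_rtr: "fip m n A B = rtr n (qmult m (qadj A) B)"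
  unfolding fip_def rtr_def qmult_def qadj_def by simp (rule sum.swap)

lemma fip_sym: "fip m n A B = fip m n B A"
  unfolding fip_def by (simp add: qre_qcnj_mult[of "A _ _"])

lemma fro_sq: "(qfro_norm m n A)\<^sup>2 = fip m n A A"
  unfolding qfro_norm_def fip_def by (simp add: qre_qcnj_self sum_nonneg)

lemma fip_diff: "fip m n (qmat_diff A B) (qmat_diff A B) = fip m n A A + fip m n B B - 2 * fip m n A B"
proof -
  have "fip m n (qmat_diff A B) (qmat_diff A B) = (\<Sum>i<m. \<Sum>j<n. qnorm2 (A i j - B i j))"
    unfolding fip_def qmat_diff_def by (simp only: qcnj_simps(3)[symmetric] qre_qcnj_self)
  also have "\<dots> = fip m n A A + fip m n B B - 2 * fip m n A B"
    unfolding fip_def qnorm2_diff qre_qcnj_self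
    by (simp add: sum.distrib sum_subtractf sum_distrib_left)
  finally show ?thesis .
qed



section \<open>Rearrangement inequality for doubly substochastic weights\<close>

lemma tele:
  fixes a :: "nat \<Rightarrow> real" and n :: nat
  assumes "i < n"
  shows "a i = (\<Sum>p<n. (if i \<le> p then 1 else 0) * (if Suc p < n then a p - a (Suc p) else a p))"
proof -
  define da where "da = (\<lambda>p. if Suc p < n then a p - a (Suc p) else a p)"
  have "(\<Sum>p<n. (if i \<le> p then 1 else 0) * da p) = (\<Sum>p\<in>{i..<n}. da p)"
    by (rule sum.mono_neutral_cong_right) auto
  also have "\<dots> = a i"
    using assms
  proof (induction "n - i" arbitrary: i)
    case 0
    then show ?case by simp
  next
    case (Suc d)
    show ?case
    proof (cases "Suc i < n")
      case True
      then have "(\<Sum>p\<in>{i..<n}. da p) = da i + (\<Sum>p\<in>{Suc i..<n}. da p)"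
        by (simp add: sum.atLeast_Suc_lessThan)
      also have "(\<Sum>p\<in>{Suc i..<n}. da p) = a (Suc i)"
        using Suc True by simp
      finally show ?thesis using True by (simp add: da_def)
    next
      case False
      then have "{i..<n} = {i}" using Suc by auto
      then show ?thesis using False by (simp add: da_def)
    qed
  qed
  finally show ?thesis by (simp add: da_def)
qed

lemma abel2:
  fixes a b da db :: "nat \<Rightarrow> real" and E ind :: "nat \<Rightarrow> nat \<Rightarrow> real"
  assumes "\<And>i. i < n \<Longrightarrow> a i = (\<Sum>p<n. ind i p * da p)"
    and "\<And>j. j < n \<Longrightarrow> b j = (\<Sum>q<n. ind j q * db q)"
  shows "(\<Sum>i<n. \<Sum>j<n. a i * b j * E i j)
       = (\<Sum>p<n. \<Sum>q<n. da p * db q * (\<Sum>i<n. \<Sum>j<n. ind i p * ind j q * E i j))"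
proof -
  have "(\<Sum>i<n. \<Sum>j<n. a i * b j * E i j)
     = (\<Sum>i<n. \<Sum>j<n. \<Sum>p<n. \<Sum>q<n. da p * db q * (ind i p * ind j q * E i j))"
    by (intro sum.cong refl)
       (simp add: assms sum_distrib_left sum_distrib_right mult_ac; rule sum.swap)
  also have "\<dots> = (\<Sum>i<n. \<Sum>p<n. \<Sum>j<n. \<Sum>q<n. da p * db q * (ind i p * ind j q * E i j))"
    by (intro sum.cong refl sum.swap)
  also have "\<dots> = (\<Sum>p<n. \<Sum>i<n. \<Sum>j<n. \<Sum>q<n. da p * db q * (ind i p * ind j q * E i j))"
    by (rule sum.swap)
  also have "\<dots> = (\<Sum>p<n. \<Sum>i<n. \<Sum>q<n. \<Sum>j<n. da p * db q * (ind i p * ind j q * E i j))"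
    by (intro sum.cong refl sum.swap)
  also have "\<dots> = (\<Sum>p<n. \<Sum>q<n. \<Sum>i<n. \<Sum>j<n. da p * db q * (ind i p * ind j q * E i j))"
    by (intro sum.cong refl sum.swap)
  also have "\<dots> = (\<Sum>p<n. \<Sum>q<n. da p * db q * (\<Sum>i<n. \<Sum>j<n. ind i p * ind j q * E i j))"
    by (simp add: sum_distrib_left)
  finally show ?thesis .
qed

lemma dss:
  fixes a b :: "nat \<Rightarrow> real" and D :: "nat \<Rightarrow> nat \<Rightarrow> real"
  assumes adesc: "\<And>i j. i \<le> j \<Longrightarrow> j < n \<Longrightarrow> a j \<le> a i"
    and bdesc: "\<And>i j. i \<le> j \<Longrightarrow> j < n \<Longrightarrow> b j \<le> b i"
    and apos: "\<And>i. i < n \<Longrightarrow> 0 \<le> a i" and bpos: "\<And>i. i < n \<Longrightarrow> 0 \<le> b i"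
    and Dpos: "\<And>i j. i < n \<Longrightarrow> j < n \<Longrightarrow> 0 \<le> D i j"
    and Drow: "\<And>i. i < n \<Longrightarrow> (\<Sum>j<n. D i j) \<le> 1"
    and Dcol: "\<And>j. j < n \<Longrightarrow> (\<Sum>i<n. D i j) \<le> 1"
  shows "(\<Sum>i<n. \<Sum>j<n. a i * b j * D i j) \<le> (\<Sum>i<n. a i * b i)"
proof -
  define ind where "ind = (\<lambda>(i::nat) p. if i \<le> p then 1 else (0::real))"
  define da where "da = (\<lambda>p. if Suc p < n then a p - a (Suc p) else a p)"
  define db where "db = (\<lambda>p. if Suc p < n then b p - b (Suc p) else b p)"
  define Id :: "nat \<Rightarrow> nat \<Rightarrow> real" where "Id = (\<lambda>i j. if i = j then 1 else 0)"
  have ta: "\<And>i. i < n \<Longrightarrow> a i = (\<Sum>p<n. ind i p * da p)"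
    unfolding ind_def da_def by (rule tele)
  have tb: "\<And>i. i < n \<Longrightarrow> b i = (\<Sum>p<n. ind i p * db p)"
    unfolding ind_def db_def by (rule tele)
  have dapos: "p < n \<Longrightarrow> 0 \<le> da p" for p
    using adesc[of p "Suc p"] apos[of p] by (auto simp: da_def)
  have dbpos: "p < n \<Longrightarrow> 0 \<le> db p" for p
    using bdesc[of p "Suc p"] bpos[of p] by (auto simp: db_def)
  have key: "(\<Sum>i<n. \<Sum>j<n. ind i p * ind j q * D i j) \<le> (\<Sum>i<n. \<Sum>j<n. ind i p * ind j q * Id i j)"
    if "p < n" "q < n" for p q
  proof -
    have rhs: "(\<Sum>i<n. \<Sum>j<n. ind i p * ind j q * Id i j) = (\<Sum>i<n. ind i p * ind i q)"
      unfolding Id_def by (simp add: if_distrib[where f="\<lambda>x. _ * x"] sum.delta cong: if_cong)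
    have indpos: "0 \<le> ind i p" for i p unfolding ind_def by simp
    have indle: "ind i p \<le> 1" for i p unfolding ind_def by simp
    show ?thesis
    proof (cases "p \<le> q")
      case True
      have "(\<Sum>i<n. \<Sum>j<n. ind i p * ind j q * D i j) \<le> (\<Sum>i<n. \<Sum>j<n. ind i p * D i j)"
        by (intro sum_mono) (auto simp: ind_def Dpos)
      also have "\<dots> = (\<Sum>i<n. ind i p * (\<Sum>j<n. D i j))" by (simp add: sum_distrib_left)
      also have "\<dots> \<le> (\<Sum>i<n. ind i p)"
        by (intro sum_mono) (auto simp: ind_def Drow)
      also have "\<dots> = (\<Sum>i<n. ind i p * ind i q)"
        by (intro sum.cong refl) (use True in \<open>auto simp: ind_def\<close>)
      finally show ?thesis using rhs by simp
    next
      case False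
      have "(\<Sum>i<n. \<Sum>j<n. ind i p * ind j q * D i j) \<le> (\<Sum>i<n. \<Sum>j<n. ind j q * D i j)"
        by (intro sum_mono) (auto simp: ind_def Dpos)
      also have "\<dots> = (\<Sum>j<n. ind j q * (\<Sum>i<n. D i j))"
        by (subst sum.swap) (simp add: sum_distrib_left)
      also have "\<dots> \<le> (\<Sum>j<n. ind j q)"
        by (intro sum_mono) (auto simp: ind_def Dcol)
      also have "\<dots> = (\<Sum>i<n. ind i p * ind i q)"
        by (intro sum.cong refl) (use False in \<open>auto simp: ind_def\<close>)
      finally show ?thesis using rhs by simp
    qed
  qed
  have "(\<Sum>i<n. \<Sum>j<n. a i * b j * D i j)
       = (\<Sum>p<n. \<Sum>q<n. da p * db q * (\<Sum>i<n. \<Sum>j<n. ind i p * ind j q * D i j))"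
    by (rule abel2[OF ta tb])
  also have "\<dots> \<le> (\<Sum>p<n. \<Sum>q<n. da p * db q * (\<Sum>i<n. \<Sum>j<n. ind i p * ind j q * Id i j))"
    by (intro sum_mono mult_left_mono key mult_nonneg_nonneg dapos dbpos) auto
  also have "\<dots> = (\<Sum>i<n. \<Sum>j<n. a i * b j * Id i j)"
    by (rule abel2[OF ta tb, symmetric])
  also have "\<dots> = (\<Sum>i<n. a i * b i)"
    unfolding Id_def by (simp add: if_distrib[where f="\<lambda>x. _ * x"] sum.delta cong: if_cong)
  finally show ?thesis .
qed



lemma qre_qreal_mid: "qre (qreal x * (p * (qreal y * r))) = x * (y * qre (p * r))"
  by (simp add: quat_mult_comps algebra_simps)

lemma fip_svd_eq:
  assumes "n \<le> m" "qunitary m U1" "qunitary n V1" "qunitary m U2" "qunitary n V2"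
    and Y: "Y = qmult n (qmult m U1 (qdiag m n a)) (qadj V1)"
    and X: "X = qmult n (qmult m U2 (qdiag m n b)) (qadj V2)"
  shows "fip m n Y X = (\<Sum>k<n. \<Sum>l<n. a k * b l *
           qre (qmult m (qadj U1) U2 k l * qmult n (qadj V2) V1 l k))"
proof -
  define P where "P = qmult m (qadj U1) U2"
  define R where "R = qmult n (qadj V2) V1"
  define Z where "Z = qmult m (qmult m (qdiag n m a) (qadj U1)) X"
  have adjY: "qadj Y = qmult n V1 (qmult m (qdiag n m a) (qadj U1))"
    by (simp add: Y qadj_qmult)
  have "fip m n Y X = rtr n (qmult m (qadj Y) X)" by (rule fip_rtr)
  also have "qmult m (qadj Y) X = qmult n V1 Z"
    by (simp add: adjY Z_def qmult_assoc)
  also have "rtr n (qmult n V1 Z) = rtr n (qmult n Z V1)" by (rule rtr_comm)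
  also have "qmult n Z V1 = qmult m (qdiag n m a) (qmult n (qmult m P (qdiag m n b)) R)"
    by (simp add: Z_def X P_def R_def qmult_assoc)
  also have "rtr n \<dots> = (\<Sum>k<n. \<Sum>l<n. a k * b l * qre (P k l * R l k))"
  proof -
    have "qmult m (qdiag n m a) (qmult n (qmult m P (qdiag m n b)) R) k k
        = qreal (a k) * (\<Sum>l<n. P k l * qreal (b l) * R l k)" if "k < n" for k
      using that assms(1)
      by (simp add: qmult_qdiag_left min_def, simp add: qmult_def[of n] qmult_qdiag_right min_def)
    then show ?thesis unfolding rtr_def
      by (simp add: sum_distrib_left qre_qreal_mid mult.assoc)
  qed
  finally show ?thesis by (simp add: P_def R_def)
qed


lemma is_qsvdD:
  assumes "is_qsvd m n Y U s V"
  shows "qunitary m U" "qunitary n V" "\<And>i. i < min m n \<Longrightarrow> 0 \<le> s i"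
    "\<And>i j. i \<le> j \<Longrightarrow> j < min m n \<Longrightarrow> s j \<le> s i" "\<And>i. min m n \<le> i \<Longrightarrow> s i = 0"
    "Y = qmult n (qmult m U (qdiag m n s)) (qadj V)"
  using assms unfolding is_qsvd_def by auto

lemma fip_svd_self:
  assumes "n \<le> m" "is_qsvd m n Y U a V"
  shows "fip m n Y Y = (\<Sum>k<n. (a k)\<^sup>2)"
proof -
  note d = is_qsvdD[OF assms(2)]
  have "fip m n Y Y = (\<Sum>k<n. \<Sum>l<n. a k * a l *
           qre (qmult m (qadj U) U k l * qmult n (qadj V) V l k))"
    by (rule fip_svd_eq[OF assms(1) d(1,2) d(1,2) d(6) d(6)])
  also have "\<dots> = (\<Sum>k<n. \<Sum>l<n. a k * a l * (if k = l then 1 else 0))"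
    using d(1,2) assms(1) unfolding qunitary_def
    by (intro sum.cong refl) (auto simp: qident_def)
  also have "\<dots> = (\<Sum>k<n. (a k)\<^sup>2)"
    by (simp add: if_distrib[where f="\<lambda>x. _ * x"] sum.delta power2_eq_square cong: if_cong)
  finally show ?thesis .
qed

lemma fip_svd_le:
  assumes "n \<le> m" "is_qsvd m n Y U1 a V1" "is_qsvd m n X U2 b V2"
  shows "fip m n Y X \<le> (\<Sum>k<n. a k * b k)"
proof -
  note d1 = is_qsvdD[OF assms(2)] and d2 = is_qsvdD[OF assms(3)]
  define P where "P = qmult m (qadj U1) U2"
  define R where "R = qmult n (qadj V2) V1"
  define D where "D = (\<lambda>k l. (qnorm2 (P k l) + qnorm2 (R l k)) / 2)"
  have mn: "min m n = n" using assms(1) by simp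
  have P: "qunitary m P" unfolding P_def by (intro qunitary_mult qunitary_adj d1 d2)
  have R: "qunitary n R" unfolding R_def by (intro qunitary_mult qunitary_adj d1 d2)
  have "fip m n Y X = (\<Sum>k<n. \<Sum>l<n. a k * b l * qre (P k l * R l k))"
    unfolding P_def R_def by (rule fip_svd_eq[OF assms(1) d1(1,2) d2(1,2) d1(6) d2(6)])
  also have "\<dots> \<le> (\<Sum>k<n. \<Sum>l<n. a k * b l * D k l)"
  proof (intro sum_mono mult_left_mono)
    fix k l assume "k \<in> {..<n}" "l \<in> {..<n}"
    then show "0 \<le> a k * b l" using d1(3) d2(3) mn by (simp add: mult_nonneg_nonneg)
    show "qre (P k l * R l k) \<le> D k l"
      using qre_cnj_le[of "qcnj (P k l)" "R l k"] unfolding D_def by simp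
  qed
  also have "\<dots> \<le> (\<Sum>k<n. a k * b k)"
  proof (rule dss)
    show "a j \<le> a i" if "i \<le> j" "j < n" for i j using d1(4) that mn by simp
    show "b j \<le> b i" if "i \<le> j" "j < n" for i j using d2(4) that mn by simp
    show "0 \<le> a i" if "i < n" for i using d1(3) that mn by simp
    show "0 \<le> b i" if "i < n" for i using d2(3) that mn by simp
    show "0 \<le> D i j" for i j unfolding D_def by simp
    show "(\<Sum>j<n. D i j) \<le> 1" if "i < n" for i
    proof -
      have "(\<Sum>j<n. qnorm2 (P i j)) \<le> (\<Sum>j<m. qnorm2 (P i j))"
        using assms(1) by (intro sum_mono2) auto
      also have "\<dots> = 1" using qunitary_row[OF P] that assms(1) by simp
      finally have 1: "(\<Sum>j<n. qnorm2 (P i j)) \<le> 1" .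
      have 2: "(\<Sum>j<n. qnorm2 (R j i)) = 1" using qunitary_col[OF R that] .
      show ?thesis using 1 2 unfolding D_def by (simp add: sum_divide_distrib[symmetric] sum.distrib)
    qed
    show "(\<Sum>i<n. D i j) \<le> 1" if "j < n" for j
    proof -
      have "(\<Sum>i<n. qnorm2 (P i j)) \<le> (\<Sum>i<m. qnorm2 (P i j))"
        using assms(1) by (intro sum_mono2) auto
      also have "\<dots> = 1" using qunitary_col[OF P] that assms(1) by simp
      finally have 1: "(\<Sum>i<n. qnorm2 (P i j)) \<le> 1" .
      have 2: "(\<Sum>i<n. qnorm2 (R j i)) = 1" using qunitary_row[OF R that] .
      show ?thesis using 1 2 unfolding D_def by (simp add: sum_divide_distrib[symmetric] sum.distrib)
    qed
  qed
  finally show ?thesis .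
qed

lemma mirsky:
  assumes "n \<le> m" "is_qsvd m n Y U1 a V1" "is_qsvd m n X U2 b V2"
  shows "(\<Sum>k<n. (a k - b k)\<^sup>2) \<le> (qfro_norm m n (qmat_diff Y X))\<^sup>2"
proof -
  have "(qfro_norm m n (qmat_diff Y X))\<^sup>2 = fip m n Y Y + fip m n X X - 2 * fip m n Y X"
    by (simp add: fro_sq fip_diff)
  also have "\<dots> = (\<Sum>k<n. (a k)\<^sup>2) + (\<Sum>k<n. (b k)\<^sup>2) - 2 * fip m n Y X"
    using fip_svd_self[OF assms(1,2)] fip_svd_self[OF assms(1,3)] by simp
  finally have e: "(qfro_norm m n (qmat_diff Y X))\<^sup>2 = (\<Sum>k<n. (a k)\<^sup>2) + (\<Sum>k<n. (b k)\<^sup>2) - 2 * fip m n Y X" .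
  have "(\<Sum>k<n. (a k - b k)\<^sup>2) = (\<Sum>k<n. (a k)\<^sup>2) + (\<Sum>k<n. (b k)\<^sup>2) - 2 * (\<Sum>k<n. a k * b k)"
    by (simp add: power2_diff sum.distrib sum_subtractf sum_distrib_left mult.assoc)
  then show ?thesis using e fip_svd_le[OF assms] by simp
qed

lemma fro_svd:
  assumes "n \<le> m" "is_qsvd m n Y U a V"
  shows "qfro_norm m n Y = sqrt (\<Sum>k<n. (a k)\<^sup>2)"
proof -
  have "(qfro_norm m n Y)\<^sup>2 = (\<Sum>k<n. (a k)\<^sup>2)" using fip_svd_self[OF assms] fro_sq by simp
  moreover have "0 \<le> qfro_norm m n Y" unfolding qfro_norm_def by (simp add: sum_nonneg)
  ultimately show ?thesis by (metis real_sqrt_unique)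
qed

lemma svd_unique:
  assumes "n \<le> m" "is_qsvd m n Y U1 a V1" "is_qsvd m n Y U2 b V2" "k < n"
  shows "a k = b k"
proof -
  have "(\<Sum>k<n. (a k - b k)\<^sup>2) \<le> (qfro_norm m n (qmat_diff Y Y))\<^sup>2" by (rule mirsky[OF assms(1-3)])
  also have "qmat_diff Y Y = (\<lambda>i j. 0)" unfolding qmat_diff_def by simp
  also have "qfro_norm m n (\<lambda>i j. 0) = 0" unfolding qfro_norm_def by simp
  finally have "(\<Sum>k<n. (a k - b k)\<^sup>2) = 0" by (simp add: sum_nonneg antisym)
  then have "(a k - b k)\<^sup>2 = 0" using assms(4) by (simp add: sum_nonneg_eq_0_iff)
  then show ?thesis by simp
qed


definition vn2 :: "nat \<Rightarrow> (nat \<Rightarrow> quat) \<Rightarrow> real" where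
  "vn2 k u = (\<Sum>i<k. qnorm2 (u i))"

definition vin :: "nat \<Rightarrow> (nat \<Rightarrow> quat) \<Rightarrow> (nat \<Rightarrow> quat) \<Rightarrow> quat" where
  "vin k u w = (\<Sum>i<k. qcnj (u i) * w i)"

definition mv :: "nat \<Rightarrow> qmat \<Rightarrow> (nat \<Rightarrow> quat) \<Rightarrow> (nat \<Rightarrow> quat)" where
  "mv k A v = (\<lambda>i. \<Sum>j<k. A i j * v j)"

definition bil :: "nat \<Rightarrow> nat \<Rightarrow> qmat \<Rightarrow> (nat \<Rightarrow> quat) \<Rightarrow> (nat \<Rightarrow> quat) \<Rightarrow> quat" where
  "bil m n X u v = vin m u (mv n X v)"

lemma vn2_nonneg [simp]: "0 \<le> vn2 k u"
  unfolding vn2_def by (simp add: sum_nonneg)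

lemma vin_self: "qre (vin k u u) = vn2 k u"
  unfolding vin_def vn2_def by (simp add: qre_qcnj_self)

lemma vin_comm_re: "qre (vin k a b) = qre (vin k b a)"
  unfolding vin_def by (simp add: qre_qcnj_mult[of "a _"])

lemma vn2_diff: "vn2 k (\<lambda>i. a i - b i) = vn2 k a + vn2 k b - 2 * qre (vin k a b)"
  unfolding vn2_def vin_def qnorm2_diff
  by (simp add: sum.distrib sum_subtractf sum_distrib_left)

lemma vin_scale: "qre (vin k a (\<lambda>i. b i * qreal c)) = c * qre (vin k a b)"
  unfolding vin_def by (simp add: sum_distrib_left quat_mult_comps algebra_simps)

lemma vn2_scale: "vn2 k (\<lambda>i. b i * qreal c) = c\<^sup>2 * vn2 k b"
  unfolding vn2_def by (simp add: qnorm2_mult sum_distrib_left mult.commute)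

lemma vn2_cong: "(\<And>i. i < k \<Longrightarrow> a i = b i) \<Longrightarrow> vn2 k a = vn2 k b"
  unfolding vn2_def by simp

lemma vin_cong: "(\<And>i. i < k \<Longrightarrow> a i = a' i) \<Longrightarrow> (\<And>i. i < k \<Longrightarrow> b i = b' i) \<Longrightarrow> vin k a b = vin k a' b'"
  unfolding vin_def by simp

lemma vn2_zero: "vn2 k a = 0 \<Longrightarrow> i < k \<Longrightarrow> a i = 0"
  unfolding vn2_def by (simp add: sum_nonneg_eq_0_iff)

lemma bil_adj: "bil m n X u v = vin n (mv m (qadj X) u) v"
  unfolding bil_def vin_def mv_def qadj_def
  by (simp add: sum_distrib_left sum_distrib_right qcnj_mult mult.assoc) (rule sum.swap)

lemma fo_cond:
  assumes u1: "vn2 k u = 1" and mx: "\<And>u'. vn2 k u' = 1 \<Longrightarrow> qre (vin k u' w) \<le> qre (vin k u w)"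
    and "i < k"
  shows "w i = u i * qreal (qre (vin k u w))"
proof (cases "vn2 k w = 0")
  case True
  then have w0: "\<And>i. i < k \<Longrightarrow> w i = 0" using vn2_zero by blast
  then have "vin k u w = vin k u (\<lambda>_. 0)" by (intro vin_cong) auto
  then have "vin k u w = 0" by (simp add: vin_def)
  then show ?thesis using w0 \<open>i < k\<close> by simp
next
  case False
  define t where "t = sqrt (vn2 k w)"
  have tpos: "t > 0" using False unfolding t_def by (simp add: order_le_neq_trans[OF vn2_nonneg] )
  have t2: "t\<^sup>2 = vn2 k w" unfolding t_def by simp
  define u' where "u' = (\<lambda>i. w i * qreal (1/t))"
  have "vn2 k u' = 1" unfolding u'_def vn2_scale using tpos t2 False by (simp add: power_divide)
  then have le1: "qre (vin k u' w) \<le> qre (vin k u w)" by (rule mx)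
  have "qre (vin k u' w) = qre (vin k w u')" by (rule vin_comm_re)
  also have "\<dots> = (1/t) * t\<^sup>2" unfolding u'_def vin_scale vin_self t2 ..
  also have "\<dots> = t" using tpos by (simp add: power2_eq_square)
  finally have "t \<le> qre (vin k u w)" using le1 by simp
  have "vn2 k (\<lambda>i. u i - u' i) = vn2 k u + vn2 k u' - 2 * qre (vin k u u')" by (rule vn2_diff)
  also have "qre (vin k u u') = (1/t) * qre (vin k u w)" unfolding u'_def vin_scale ..
  finally have "vn2 k (\<lambda>i. u i - u' i) = 2 - 2 * ((1/t) * qre (vin k u w))"
    using u1 \<open>vn2 k u' = 1\<close> by simp
  moreover have "0 \<le> vn2 k (\<lambda>i. u i - u' i)" by simp
  ultimately have "(1/t) * qre (vin k u w) \<le> 1" by linarith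
  then have "qre (vin k u w) \<le> t" using tpos by (simp add: pos_divide_le_eq)
  then have st: "qre (vin k u w) = t" using \<open>t \<le> qre (vin k u w)\<close> by simp
  then have "vn2 k (\<lambda>i. u i - u' i) = 0"
    using \<open>vn2 k (\<lambda>i. u i - u' i) = 2 - 2 * ((1/t) * qre (vin k u w))\<close> tpos by simp
  then have "u i - u' i = 0" using vn2_zero \<open>i < k\<close> by blast
  then have "u i = w i * qreal (1/t)" unfolding u'_def by simp
  then have "u i * qreal t = w i" using tpos
    by (simp add: mult.assoc qreal_simps(4)[symmetric])
  then show ?thesis using st by simp
qed



definition qext :: "quat \<Rightarrow> qmat \<Rightarrow> qmat" where
  "qext c A = (\<lambda>i j. if i = 0 then (if j = 0 then c else 0) else if j = 0 then 0 else A (i - 1) (j - 1))"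

lemma qext_simps [simp]:
  "qext c A 0 0 = c" "qext c A 0 (Suc j) = 0" "qext c A (Suc i) 0 = 0"
  "qext c A (Suc i) (Suc j) = A i j"
  by (simp_all add: qext_def)

lemma qext_mult: "qmult (Suc k) (qext c A) (qext d B) = qext (c * d) (qmult k A B)"
proof (intro ext)
  fix i j
  show "qmult (Suc k) (qext c A) (qext d B) i j = qext (c * d) (qmult k A B) i j"
    by (cases i; cases j) (simp_all add: qmult_def sum.lessThan_Suc_shift del: sum.lessThan_Suc)
qed

lemma qadj_qext: "qadj (qext c A) = qext (qcnj c) (qadj A)"
  unfolding qadj_def qext_def by (auto intro!: ext)

lemma qident_qext: "qident (Suc k) = qext 1 (qident k)"
proof (intro ext)
  fix i j show "qident (Suc k) i j = qext 1 (qident k) i j"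
    by (cases i; cases j) (simp_all add: qident_def)
qed

lemma qdiag_qext: "qdiag (Suc m) (Suc n) s = qext (qreal (s 0)) (qdiag m n (\<lambda>i. s (Suc i)))"
proof (intro ext)
  fix i j show "qdiag (Suc m) (Suc n) s i j = qext (qreal (s 0)) (qdiag m n (\<lambda>i. s (Suc i))) i j"
    by (cases i; cases j) (simp_all add: qdiag_def)
qed

lemma qext_qmats:
  assumes "A \<in> qmats m n" shows "qext c A \<in> qmats (Suc m) (Suc n)"
  unfolding qmats_def2
proof (intro allI impI)
  fix i j assume "Suc m \<le> i \<or> Suc n \<le> j"
  then show "qext c A i j = 0"
    by (cases i; cases j) (auto intro: qmatsD[OF assms])
qed

lemma qunitary_qext: "qunitary k A \<Longrightarrow> qunitary (Suc k) (qext 1 A)"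
  unfolding qunitary_def by (simp add: qext_qmats qadj_qext qext_mult qident_qext)



section \<open>Unitary matrix with prescribed first column\<close>

lemma qdiagq_unitary:
  assumes "\<And>i. i < k \<Longrightarrow> qnorm2 (d i) = 1"
  shows "qunitary k (\<lambda>i j. if i = j \<and> i < k then d i else 0)"
proof -
  let ?P = "\<lambda>i j. if i = j \<and> i < k then d i else 0"
  have 1: "qmult k (qadj ?P) ?P = qident k"
  proof (intro ext)
    fix i j show "qmult k (qadj ?P) ?P i j = qident k i j"
      using assms by (cases "i < k") (auto simp: qmult_def qadj_def qident_def qcnj_mult_self
        if_distrib[where f="\<lambda>x. x * _"] if_distrib[where f="\<lambda>x. _ * x"] if_distrib[where f=qcnj] sum.delta' cong: if_cong)
  qed
  have 2: "qmult k ?P (qadj ?P) = qident k"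
  proof (intro ext)
    fix i j show "qmult k ?P (qadj ?P) i j = qident k i j"
      using assms by (cases "i < k") (auto simp: qmult_def qadj_def qident_def mult_qcnj_self
        if_distrib[where f="\<lambda>x. x * _"] if_distrib[where f="\<lambda>x. _ * x"] if_distrib[where f=qcnj] sum.delta' cong: if_cong)
  qed
  show ?thesis unfolding qunitary_def using 1 2 by (auto simp: qmats_def)
qed


lemma qreal_mid1: "qreal a * (x * y) * (qreal b * (y' * z)) = qreal (a * b) * (x * (y * y') * z)"
  by (simp add: quat_eq_iff quat_mult_comps algebra_simps)

lemma qreal_mid2: "qreal a * (x * (y * qreal b)) = qreal (a * b) * (x * y)"
  by (simp add: quat_eq_iff quat_mult_comps algebra_simps)

lemma qreal_mid3: "x * qreal a * z = qreal a * (x * z)"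
  by (simp add: quat_eq_iff quat_mult_comps algebra_simps)

lemma qreal_mid4: "qreal a * (x * qreal b * y) = qreal (a * b) * (x * y)"
  by (simp add: quat_eq_iff quat_mult_comps algebra_simps)

lemma qreal_mid5: "qreal a * (x * (qreal b * y)) = qreal (a * b) * (x * y)"
  by (simp add: quat_eq_iff quat_mult_comps algebra_simps)

lemma qcnj_qreal_mult: "qcnj (qreal a * x) = qreal a * qcnj x"
  by (simp add: quat_eq_iff quat_mult_comps algebra_simps)

lemma house_unitary:
  fixes w :: "nat \<Rightarrow> quat" and c :: real
  assumes c: "c \<noteq> 0" and ww: "(\<Sum>l<m. qcnj (w l) * w l) = qreal (2 * c)"
  defines "H \<equiv> \<lambda>i j. if i < m \<and> j < m then qident m i j - qreal (1/c) * (w i * qcnj (w j)) else 0"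
  shows "qunitary m H"
proof -
  have adj: "qadj H = H"
    unfolding H_def qadj_def qident_def
    by (auto intro!: ext simp: qcnj_mult qreal_commute)
  have HQ: "H \<in> qmats m m" unfolding H_def qmats_def by auto
  have sq: "qmult m H H = qident m"
  proof (intro ext)
    fix i j
    show "qmult m H H i j = qident m i j"
    proof (cases "i < m \<and> j < m")
      case False
      then show ?thesis unfolding qmult_def H_def qident_def by auto
    next
      case True
      let ?s = "qreal (1/c)"
      have "qmult m H H i j = (\<Sum>l<m. (qident m i l - ?s * (w i * qcnj (w l))) * (qident m l j - ?s * (w l * qcnj (w j))))"
        unfolding qmult_def H_def using True by (intro sum.cong) auto
      also have "\<dots> = (\<Sum>l<m. qident m i l * qident m l j) - (\<Sum>l<m. qident m i l * (?s * (w l * qcnj (w j))))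
          - (\<Sum>l<m. ?s * (w i * qcnj (w l)) * qident m l j) + (\<Sum>l<m. ?s * (w i * qcnj (w l)) * (?s * (w l * qcnj (w j))))"
        by (simp add: algebra_simps sum.distrib sum_subtractf)
      also have "(\<Sum>l<m. qident m i l * qident m l j) = qident m i j"
        using True by (simp add: qident_def sum.delta' if_distrib[where f="\<lambda>x. x * _"] cong: if_cong)
      also have "(\<Sum>l<m. qident m i l * (?s * (w l * qcnj (w j)))) = ?s * (w i * qcnj (w j))"
        using True by (simp add: qident_def sum.delta' if_distrib[where f="\<lambda>x. x * _"] cong: if_cong)
      also have "(\<Sum>l<m. ?s * (w i * qcnj (w l)) * qident m l j) = ?s * (w i * qcnj (w j))"
        using True by (simp add: qident_def sum.delta if_distrib[where f="\<lambda>x. _ * x"] cong: if_cong)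
      also have "(\<Sum>l<m. ?s * (w i * qcnj (w l)) * (?s * (w l * qcnj (w j))))
          = (\<Sum>l<m. qreal (1/c * (1/c)) * (w i * (qcnj (w l) * w l) * qcnj (w j)))"
        by (simp only: qreal_mid1)
      also have "\<dots> = qreal (1/c * (1/c)) * (w i * (\<Sum>l<m. qcnj (w l) * w l) * qcnj (w j))"
        by (simp add: sum_distrib_left sum_distrib_right)
      also have "\<dots> = qreal (1/c * (1/c)) * (w i * qreal (2 * c) * qcnj (w j))" by (simp add: ww)
      also have "\<dots> = qreal (1/c * (1/c) * (2 * c)) * (w i * qcnj (w j))"
        by (rule qreal_mid4)
      also have "qreal (1/c * (1/c) * (2 * c)) * (w i * qcnj (w j)) = ?s * (w i * qcnj (w j)) + ?s * (w i * qcnj (w j))"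
      proof -
        have "1/c * (1/c) * (2 * c) = 1/c + 1/c" using c by (simp add: field_simps)
        then show ?thesis by (simp only: qreal_simps(3) distrib_right)
      qed
      finally show ?thesis by simp
    qed
  qed
  show ?thesis unfolding qunitary_def using HQ adj sq by simp
qed


lemma sum_split0:
  fixes f :: "nat \<Rightarrow> 'a::comm_monoid_add"
  assumes "0 < m" shows "(\<Sum>i<m. f i) = f 0 + (\<Sum>i\<in>{1..<m}. f i)"
proof -
  have "{..<m} = insert 0 {1..<m}" using assms by auto
  then show ?thesis by simp
qed

lemma house:
  assumes u1: "vn2 m u = 1" and m0: "0 < m"
  shows "\<exists>P. qunitary m P \<and> (\<forall>i<m. P i 0 = u i)"
proof -
  define r where "r = sqrt (qnorm2 (u 0))"
  define q where "q = (if u 0 = 0 then 1 else u 0 * qreal (1/r))"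
  have r0: "0 \<le> r" unfolding r_def by simp
  have rsq: "r\<^sup>2 = qnorm2 (u 0)" unfolding r_def by simp
  have q1: "qnorm2 q = 1"
  proof (cases "u 0 = 0")
    case False
    then have "r \<noteq> 0" unfolding r_def by simp
    then show ?thesis using False rsq unfolding q_def by (simp add: qnorm2_mult power_divide)
  qed (simp add: q_def)
  have u0q: "u 0 = q * qreal r"
  proof (cases "u 0 = 0")
    case False
    then have "r \<noteq> 0" unfolding r_def by simp
    then show ?thesis using False unfolding q_def
      by (simp add: mult.assoc qreal_simps(4)[symmetric])
  next
    case True then show ?thesis unfolding q_def r_def by simp
  qed
  have split: "vn2 m u = qnorm2 (u 0) + (\<Sum>i\<in>{1..<m}. qnorm2 (u i))"
    unfolding vn2_def by (rule sum_split0[OF m0])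
  have rest_nonneg: "0 \<le> (\<Sum>i\<in>{1..<m}. qnorm2 (u i))" by (simp add: sum_nonneg)
  have r1: "r \<le> 1"
  proof -
    have "r\<^sup>2 \<le> 1" using split u1 rest_nonneg rsq by simp
    then show ?thesis using r0 by (simp add: power_le_one_iff abs_le_iff power2_le_iff_abs_le)
  qed
  show ?thesis
  proof (cases "r = 1")
    case True
    then have "(\<Sum>i\<in>{1..<m}. qnorm2 (u i)) = 0" using split u1 rsq by simp
    then have ui0: "u i = 0" if "1 \<le> i" "i < m" for i
      using that by (simp add: sum_nonneg_eq_0_iff)
    define d where "d = (\<lambda>i::nat. if i = 0 then q else 1)"
    let ?P = "\<lambda>i j. if i = j \<and> i < m then d i else 0"
    have "qunitary m ?P" by (rule qdiagq_unitary) (simp add: d_def q1)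
    moreover have "\<forall>i<m. ?P i 0 = u i"
      using ui0 u0q True m0 by (auto simp: d_def)
    ultimately show ?thesis by blast
  next
    case False
    then have r1': "r < 1" using r1 by simp
    define c where "c = 1 - r"
    have c0: "c \<noteq> 0" "0 < c" using r1' unfolding c_def by auto
    define w where "w = (\<lambda>i. if i = 0 then u 0 - q else u i)"
    have "vn2 m w = qnorm2 (u 0 - q) + (\<Sum>i\<in>{1..<m}. qnorm2 (u i))"
      unfolding vn2_def by (subst sum_split0[OF m0]) (simp add: w_def)
    also have "qnorm2 (u 0 - q) = qnorm2 (u 0) + 1 - 2 * r"
    proof -
      have "qcnj (u 0) * q = qreal r"
        unfolding u0q qcnj_mult by (simp add: mult.assoc qcnj_mult_self q1)
      then show ?thesis by (simp add: qnorm2_diff q1)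
    qed
    finally have vw: "vn2 m w = 2 * c" using split u1 unfolding c_def by simp
    have ww: "(\<Sum>l<m. qcnj (w l) * w l) = qreal (2 * c)"
      using vw unfolding vn2_def by (simp add: qcnj_mult_self qreal_sum[symmetric] del: qreal_simps)
    define H where "H = (\<lambda>i j. if i < m \<and> j < m then qident m i j - qreal (1/c) * (w i * qcnj (w j)) else 0)"
    have HU: "qunitary m H" unfolding H_def by (rule house_unitary[OF c0(1) ww])
    define d where "d = (\<lambda>i::nat. if i = 0 then q else 1)"
    define D where "D = (\<lambda>i j. if i = j \<and> i < m then d i else 0)"
    have DU: "qunitary m D" unfolding D_def by (rule qdiagq_unitary) (simp add: d_def q1)
    have col: "qmult m H D i 0 = u i" if "i < m" for i
    proof -
      have "qmult m H D i 0 = H i 0 * q"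
        unfolding qmult_def D_def d_def using m0
        by (simp add: if_distrib[where f="\<lambda>x. _ * x"] sum.delta' cong: if_cong)
      also have "qcnj (w 0) = qreal (r - 1) * qcnj q"
        unfolding w_def by (simp add: u0q quat_eq_iff quat_mult_comps algebra_simps)
      then have "qreal (1/c) * (w i * qcnj (w 0)) = - (w i * qcnj q)"
      proof -
        assume e: "qcnj (w 0) = qreal (r - 1) * qcnj q"
        have "qreal (1/c) * (w i * qcnj (w 0)) = qreal (1/c * (r - 1)) * (w i * qcnj q)"
          unfolding e by (rule qreal_mid5)
        also have "1/c * (r - 1) = -1" using c0 unfolding c_def by (simp add: field_simps)
        finally show ?thesis by (simp add: quat_eq_iff)
      qed
      then have "H i 0 = qident m i 0 + w i * qcnj q" unfolding H_def using that m0 by simp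
      also have "(qident m i 0 + w i * qcnj q) * q = u i"
      proof -
        have "qcnj q * q = 1" using q1 by (simp add: qcnj_mult_self)
        then have "w i * qcnj q * q = w i" by (simp add: mult.assoc)
        then show ?thesis unfolding w_def qident_def using that m0
          by (cases "i = 0") (simp_all add: distrib_right)
      qed
      finally show ?thesis .
    qed
    show ?thesis using qunitary_mult[OF HU DU] col by blast
  qed
qed



section \<open>Existence of a maximising pair of unit vectors\<close>

definition boxK :: "nat \<Rightarrow> (nat \<Rightarrow> real) set" where
  "boxK N = Pi UNIV (\<lambda>k. if k < N then {-1..1} else {0})"

lemma compact_boxK: "compact (boxK N)"
proof -
  have "compactin (product_topology (\<lambda>i. euclidean) UNIV) (PiE UNIV (\<lambda>k. if k < N then {-1..1::real} else {0}))"
    by (subst compactin_PiE) auto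
  then show ?thesis unfolding boxK_def euclidean_product_topology PiE_UNIV_domain by simp
qed

lemma cont_fst_coord [continuous_intros]:
  "continuous_on S (\<lambda>p::(nat \<Rightarrow> real) \<times> (nat \<Rightarrow> real). fst p k)"
proof -
  have "continuous_on UNIV ((\<lambda>x. x k) \<circ> (fst :: (nat \<Rightarrow> real) \<times> (nat \<Rightarrow> real) \<Rightarrow> _))"
    by (intro continuous_on_compose continuous_on_fst continuous_on_id)
       (rule continuous_on_subset[OF continuous_on_product_coordinates], simp)
  then show ?thesis unfolding comp_def by (rule continuous_on_subset) simp
qed

lemma cont_snd_coord [continuous_intros]:
  "continuous_on S (\<lambda>p::(nat \<Rightarrow> real) \<times> (nat \<Rightarrow> real). snd p k)"
proof -
  have "continuous_on UNIV ((\<lambda>x. x k) \<circ> (snd :: (nat \<Rightarrow> real) \<times> (nat \<Rightarrow> real) \<Rightarrow> _))"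
    by (intro continuous_on_compose continuous_on_snd continuous_on_id)
       (rule continuous_on_subset[OF continuous_on_product_coordinates], simp)
  then show ?thesis unfolding comp_def by (rule continuous_on_subset) simp
qed


definition enc :: "(nat \<Rightarrow> real) \<Rightarrow> nat \<Rightarrow> quat" where
  "enc x i = Quat (x (4*i)) (x (4*i+1)) (x (4*i+2)) (x (4*i+3))"

definition dec :: "nat \<Rightarrow> (nat \<Rightarrow> quat) \<Rightarrow> nat \<Rightarrow> real" where
  "dec N u k = (if k < 4*N then (if k mod 4 = 0 then qre (u (k div 4)) else if k mod 4 = 1 then qi (u (k div 4))
      else if k mod 4 = 2 then qj (u (k div 4)) else qk (u (k div 4))) else 0)"

lemma enc_comps [simp]: "qre (enc x i) = x (4*i)" "qi (enc x i) = x (4*i+1)"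
  "qj (enc x i) = x (4*i+2)" "qk (enc x i) = x (4*i+3)"
  by (simp_all add: enc_def)

lemma div4_facts: "(4*i) div 4 = (i::nat)" "(4*i) mod 4 = (0::nat)"
  "Suc (4*i) div 4 = i" "Suc (4*i) mod 4 = 1"
  "Suc (Suc (4*i)) div 4 = i" "Suc (Suc (4*i)) mod 4 = 2"
  "Suc (Suc (Suc (4*i))) div 4 = i" "Suc (Suc (Suc (4*i))) mod 4 = 3"
  by presburger+

lemma enc_dec: "i < N \<Longrightarrow> enc (dec N u) i = u i"
  unfolding enc_def dec_def by (simp add: quat_eq_iff div4_facts)

lemma comp_sq_le:
  "(qre q)\<^sup>2 \<le> qnorm2 q" "(qi q)\<^sup>2 \<le> qnorm2 q" "(qj q)\<^sup>2 \<le> qnorm2 q" "(qk q)\<^sup>2 \<le> qnorm2 q"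
  unfolding qnorm2_def by simp_all

lemma abs_le1_of_sq: "(x::real)\<^sup>2 \<le> 1 \<Longrightarrow> -1 \<le> x \<and> x \<le> 1"
proof -
  assume "x\<^sup>2 \<le> 1"
  then have "\<bar>x\<bar> \<le> 1" by (simp add: abs_square_le_1)
  then show ?thesis by arith
qed

lemma comps_bounded:
  assumes "qnorm2 q \<le> 1"
  shows "-1 \<le> qre q \<and> qre q \<le> 1" "-1 \<le> qi q \<and> qi q \<le> 1"
    "-1 \<le> qj q \<and> qj q \<le> 1" "-1 \<le> qk q \<and> qk q \<le> 1"
  using comp_sq_le[of q] assms by (meson abs_le1_of_sq order_trans)+

lemma dec_box:
  assumes "vn2 N u = 1" shows "dec N u \<in> boxK (4*N)"
proof -
  have q: "qnorm2 (u i) \<le> 1" if "i < N" for i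
  proof -
    have "qnorm2 (u i) \<le> vn2 N u" unfolding vn2_def
      by (rule member_le_sum) (use that in auto)
    then show ?thesis using assms by simp
  qed
  have "dec N u k \<in> {-1..1}" if "k < 4*N" for k
  proof -
    have "k div 4 < N" using that by simp
    then have "qnorm2 (u (k div 4)) \<le> 1" by (rule q)
    then show ?thesis unfolding dec_def using that comps_bounded[of "u (k div 4)"]
      by auto
  qed
  then show ?thesis unfolding boxK_def by (auto simp: dec_def)
qed

lemma bil_cong:
  assumes "\<And>i. i < m \<Longrightarrow> u i = u' i" "\<And>j. j < n \<Longrightarrow> v j = v' j"
  shows "bil m n X u v = bil m n X u' v'"
  unfolding bil_def mv_def using assms by (intro vin_cong) auto

lemma bil_expand: "qre (bil m n X u v) = (\<Sum>i<m. \<Sum>j<n. qre (qcnj (u i) * (X i j * v j)))"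
  unfolding bil_def vin_def mv_def by (simp add: sum_distrib_left)

lemma max_exists:
  assumes m0: "0 < m" and n0: "0 < n"
  shows "\<exists>u v. vn2 m u = 1 \<and> vn2 n v = 1 \<and>
    (\<forall>u' v'. vn2 m u' = 1 \<longrightarrow> vn2 n v' = 1 \<longrightarrow> qre (bil m n X u' v') \<le> qre (bil m n X u v))"
proof -
  define S where "S = (boxK (4*m) \<times> boxK (4*n)) \<inter> {p. vn2 m (enc (fst p)) = 1} \<inter> {p. vn2 n (enc (snd p)) = 1}"
  define F where "F = (\<lambda>p. qre (bil m n X (enc (fst p)) (enc (snd p))))"
  have c1: "continuous_on UNIV (\<lambda>p::(nat \<Rightarrow> real) \<times> (nat \<Rightarrow> real). vn2 m (enc (fst p)))"
    unfolding vn2_def qnorm2_def by (simp add: enc_def) (intro continuous_intros)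
  have c2: "continuous_on UNIV (\<lambda>p::(nat \<Rightarrow> real) \<times> (nat \<Rightarrow> real). vn2 n (enc (snd p)))"
    unfolding vn2_def qnorm2_def by (simp add: enc_def) (intro continuous_intros)
  have "compact S"
    unfolding S_def
    by (intro compact_Int_closed compact_Times compact_boxK closed_Collect_eq c1 c2 continuous_on_const)
  moreover
  define e :: "nat \<Rightarrow> quat" where "e = (\<lambda>i. if i = 0 then 1 else 0)"
  have e1: "vn2 k e = 1" if "0 < k" for k
  proof -
    have "vn2 k e = (\<Sum>i<k. if i = 0 then 1 else 0)" unfolding vn2_def e_def by (intro sum.cong) auto
    then show ?thesis using that by simp
  qed
  have inS: "(dec m u', dec n v') \<in> S" if "vn2 m u' = 1" "vn2 n v' = 1" for u' v'
  proof -
    have "vn2 m (enc (dec m u')) = vn2 m u'" by (intro vn2_cong) (simp add: enc_dec)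
    moreover have "vn2 n (enc (dec n v')) = vn2 n v'" by (intro vn2_cong) (simp add: enc_dec)
    ultimately show ?thesis unfolding S_def using that dec_box by auto
  qed
  have "S \<noteq> {}" using inS[OF e1[OF m0] e1[OF n0]] by blast
  moreover have "continuous_on S F"
    unfolding F_def bil_expand by (simp add: quat_mult_comps) (intro continuous_intros)
  ultimately obtain p where pS: "p \<in> S" and pmax: "\<And>y. y \<in> S \<Longrightarrow> F y \<le> F p"
    using continuous_attains_sup[of S F] by blast
  show ?thesis
  proof (intro exI conjI allI impI)
    show "vn2 m (enc (fst p)) = 1" "vn2 n (enc (snd p)) = 1" using pS unfolding S_def by auto
    fix u' v' assume u': "vn2 m u' = 1" and v': "vn2 n v' = 1"
    have "F (dec m u', dec n v') \<le> F p" by (rule pmax[OF inS[OF u' v']])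
    moreover have "F (dec m u', dec n v') = qre (bil m n X u' v')"
    proof -
      have "bil m n X (enc (dec m u')) (enc (dec n v')) = bil m n X u' v'"
        by (rule bil_cong) (simp_all add: enc_dec)
      then show ?thesis unfolding F_def by simp
    qed
    ultimately show "qre (bil m n X u' v') \<le> qre (bil m n X (enc (fst p)) (enc (snd p)))"
      unfolding F_def by simp
  qed
qed



section \<open>Existence of the quaternion SVD\<close>

lemma sandwich:
  assumes "qunitary m U" "qunitary n V" "X \<in> qmats m n"
  shows "qmult n (qmult m U (qmult n (qmult m (qadj U) X) V)) (qadj V) = X"
proof -
  have "qmult n (qmult m U (qmult n (qmult m (qadj U) X) V)) (qadj V)
      = qmult m (qmult m U (qadj U)) (qmult n X (qmult n V (qadj V)))"
    by (simp add: qmult_assoc)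
  also have "\<dots> = X" using assms unfolding qunitary_def
    by (simp add: qmult_ident_right[OF assms(3)] qmult_ident_left[OF assms(3)])
  finally show ?thesis .
qed

lemma unsandwich:
  assumes "qunitary m U" "qunitary n V" "D \<in> qmats m n"
    and "X = qmult n (qmult m U D) (qadj V)"
  shows "qmult n (qmult m (qadj U) X) V = D"
proof -
  have "qmult n (qmult m (qadj U) X) V = qmult m (qmult m (qadj U) U) (qmult n D (qmult n (qadj V) V))"
    by (simp add: assms(4) qmult_assoc)
  also have "\<dots> = D" using assms unfolding qunitary_def
    by (simp add: qmult_ident_right[OF assms(3)] qmult_ident_left[OF assms(3)])
  finally show ?thesis .
qed

lemma bil_cols: "bil m n X (\<lambda>l. U l i) (\<lambda>r. V r j) = qmult n (qmult m (qadj U) X) V i j"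
  unfolding bil_def vin_def mv_def qmult_def qadj_def
  by (simp add: sum_distrib_left sum_distrib_right mult.assoc) (rule sum.swap)

lemma vn2_col: "qunitary n U \<Longrightarrow> j < n \<Longrightarrow> vn2 n (\<lambda>l. U l j) = 1"
  unfolding vn2_def by (rule qunitary_col)

lemma qunitary_entry:
  assumes "qunitary n U" shows "(\<Sum>l<n. qcnj (U l i) * U l j) = qident n i j"
proof -
  have "qmult n (qadj U) U i j = qident n i j" using assms unfolding qunitary_def by simp
  then show ?thesis unfolding qmult_def qadj_def .
qed

lemma qnorm2_uminus [simp]: "qnorm2 (- q) = qnorm2 q"
  unfolding qnorm2_def by simp

lemma bil_uminus: "qre (bil m n X (\<lambda>i. - u i) v) = - qre (bil m n X u v)"
  unfolding bil_expand by (simp add: sum_negf)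

lemma svd_exists: "X \<in> qmats m n \<Longrightarrow> n \<le> m \<Longrightarrow> \<exists>U s V. is_qsvd m n X U s V"
proof (induction n arbitrary: m X)
  case 0
  have X0: "X = qmult 0 (qmult m (qident m) (qdiag m 0 (\<lambda>_. 0))) (qadj (qident 0))"
    using 0 by (auto intro!: ext simp: qmult_def qmatsD)
  have "is_qsvd m 0 X (qident m) (\<lambda>_. 0) (qident 0)"
    unfolding is_qsvd_def using X0 by simp
  then show ?case by blast
next
  case (Suc n)
  note XQ = Suc.prems(1)
  obtain m' where mm: "m = Suc m'" using Suc.prems(2) by (cases m) auto
  have nm': "n \<le> m'" using Suc.prems(2) mm by simp
  have m0: "0 < m" using mm by simp
  obtain u v where u1: "vn2 m u = 1" and v1: "vn2 (Suc n) v = 1"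
    and mx: "\<And>u' v'. vn2 m u' = 1 \<Longrightarrow> vn2 (Suc n) v' = 1 \<Longrightarrow>
                qre (bil m (Suc n) X u' v') \<le> qre (bil m (Suc n) X u v)"
    using max_exists[OF m0, of "Suc n" X] by auto
  define \<sigma> where "\<sigma> = qre (bil m (Suc n) X u v)"
  have fo1: "mv (Suc n) X v i = u i * qreal \<sigma>" if "i < m" for i
  proof -
    have "mv (Suc n) X v i = u i * qreal (qre (vin m u (mv (Suc n) X v)))"
      by (rule fo_cond[OF u1 _ that]) (use mx[OF _ v1] in \<open>simp add: bil_def\<close>)
    then show ?thesis by (simp add: \<sigma>_def bil_def)
  qed
  have fo2: "mv m (qadj X) u j = v j * qreal \<sigma>" if "j < Suc n" for j
  proof -
    have eq: "qre (vin (Suc n) v' (mv m (qadj X) u)) = qre (bil m (Suc n) X u v')" for v'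
      by (simp add: bil_adj vin_comm_re)
    have "mv m (qadj X) u j = v j * qreal (qre (vin (Suc n) v (mv m (qadj X) u)))"
      by (rule fo_cond[OF v1 _ that]) (use mx[OF u1] in \<open>simp add: eq\<close>)
    then show ?thesis by (simp add: \<sigma>_def eq)
  qed
  have sig0: "0 \<le> \<sigma>"
  proof -
    have "vn2 m (\<lambda>i. - u i) = 1" using u1 by (simp add: vn2_def)
    from mx[OF this v1] show ?thesis unfolding \<sigma>_def bil_uminus by simp
  qed
  obtain P where PU: "qunitary m P" and Pc: "\<And>i. i < m \<Longrightarrow> P i 0 = u i"
    using house[OF u1 m0] by blast
  obtain Q where QU: "qunitary (Suc n) Q" and Qc: "\<And>j. j < Suc n \<Longrightarrow> Q j 0 = v j"
    using house[OF v1] by blast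
  define Z where "Z = qmult (Suc n) (qmult m (qadj P) X) Q"
  have ZQ: "Z \<in> qmats m (Suc n)" unfolding Z_def
    by (intro qmult_qmats qadj_qmats qunitary_qmats PU QU XQ)
  have Zcol: "Z i 0 = (if i = 0 then qreal \<sigma> else 0)" for i
  proof (cases "i < m")
    case False then show ?thesis using ZQ m0 by (auto simp: qmatsD)
  next
    case True
    have "Z i 0 = (\<Sum>r<Suc n. (\<Sum>l<m. qcnj (P l i) * X l r) * v r)"
      unfolding Z_def qmult_def qadj_def by (intro sum.cong refl) (simp add: Qc)
    also have "\<dots> = (\<Sum>r<Suc n. \<Sum>l<m. qcnj (P l i) * (X l r * v r))"
      by (simp only: sum_distrib_right mult.assoc)
    also have "\<dots> = (\<Sum>l<m. qcnj (P l i) * mv (Suc n) X v l)"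
      unfolding mv_def by (simp only: sum_distrib_left) (rule sum.swap)
    also have "\<dots> = (\<Sum>l<m. qcnj (P l i) * P l 0) * qreal \<sigma>"
      by (simp add: fo1 Pc sum_distrib_right mult.assoc)
    also have "(\<Sum>l<m. qcnj (P l i) * P l 0) = qident m i 0"
      by (rule qunitary_entry[OF PU])
    finally show ?thesis using True by (simp add: qident_def)
  qed
  have Zrow: "Z 0 j = (if j = 0 then qreal \<sigma> else 0)" for j
  proof (cases "j < Suc n")
    case False then show ?thesis using ZQ by (auto simp: qmatsD)
  next
    case True
    have "Z 0 j = (\<Sum>r<Suc n. qcnj (mv m (qadj X) u r) * Q r j)"
      unfolding Z_def qmult_def mv_def qadj_def using Pc m0
      by (simp add: qcnj_mult)
    also have "\<dots> = qreal \<sigma> * (\<Sum>r<Suc n. qcnj (Q r 0) * Q r j)"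
      by (simp add: fo2 Qc qcnj_mult sum_distrib_left mult.assoc del: sum.lessThan_Suc)
    also have "(\<Sum>r<Suc n. qcnj (Q r 0) * Q r j) = qident (Suc n) 0 j"
      by (rule qunitary_entry[OF QU])
    finally show ?thesis using True by (simp add: qident_def)
  qed
  define X' where "X' = (\<lambda>i j. Z (Suc i) (Suc j))"
  have X'Q: "X' \<in> qmats m' n" unfolding X'_def qmats_def2 using ZQ mm by (auto simp: qmatsD)
  have Zext: "Z = qext (qreal \<sigma>) X'"
  proof (intro ext)
    fix i j show "Z i j = qext (qreal \<sigma>) X' i j"
      by (cases i; cases j) (simp_all add: Zcol Zrow X'_def)
  qed
  obtain U' s' V' where svd': "is_qsvd m' n X' U' s' V'"
    using Suc.IH[OF X'Q nm'] by blast
  note d' = is_qsvdD[OF svd']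
  define U where "U = qmult m P (qext 1 U')"
  define V where "V = qmult (Suc n) Q (qext 1 V')"
  define s where "s = (\<lambda>i. if i = 0 then \<sigma> else s' (i - 1))"
  have UU: "qunitary m U" unfolding U_def mm
    by (intro qunitary_mult qunitary_qext d'(1)) (use PU mm in simp)
  have VU: "qunitary (Suc n) V" unfolding V_def
    by (intro qunitary_mult qunitary_qext d'(2) QU)
  have diag: "qdiag (Suc m') (Suc n) s = qext (qreal \<sigma>) (qdiag m' n s')"
    unfolding qdiag_qext by (simp add: s_def)
  have "Z = qext (1 * qreal \<sigma> * qcnj 1) (qmult n (qmult m' U' (qdiag m' n s')) (qadj V'))"
    using Zext d'(6) by simp
  also have "\<dots> = qmult (Suc n) (qmult m (qext 1 U') (qdiag m (Suc n) s)) (qadj (qext 1 V'))"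
    unfolding mm diag qadj_qext qext_mult by simp
  finally have Zeq: "Z = qmult (Suc n) (qmult m (qext 1 U') (qdiag m (Suc n) s)) (qadj (qext 1 V'))" .
  have Xeq: "X = qmult (Suc n) (qmult m U (qdiag m (Suc n) s)) (qadj V)"
  proof -
    have "X = qmult (Suc n) (qmult m P Z) (qadj Q)"
      unfolding Z_def using sandwich[OF PU QU XQ] by simp
    also have "\<dots> = qmult (Suc n) (qmult m U (qdiag m (Suc n) s)) (qadj V)"
      unfolding Zeq U_def V_def by (simp add: qmult_assoc qadj_qmult)
    finally show ?thesis .
  qed
  have s1: "s 1 \<le> \<sigma>" if "0 < n"
  proof -
    have "qmult (Suc n) (qmult m (qadj U) X) V = qdiag m (Suc n) s"
      by (rule unsandwich[OF UU VU qdiag_qmats Xeq])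
    then have "bil m (Suc n) X (\<lambda>l. U l 1) (\<lambda>r. V r 1) = qreal (s 1)"
      unfolding bil_cols using that mm nm' by (simp add: qdiag_def)
    moreover have "qre (bil m (Suc n) X (\<lambda>l. U l 1) (\<lambda>r. V r 1)) \<le> \<sigma>"
      unfolding \<sigma>_def using that mm nm' by (intro mx vn2_col UU VU) auto
    ultimately show ?thesis by simp
  qed
  have mn: "min m (Suc n) = Suc n" "min m' n = n" using Suc.prems(2) mm by auto
  have "is_qsvd m (Suc n) X U s V"
    unfolding is_qsvd_def
  proof (intro conjI allI impI UU VU Xeq)
    fix i assume "i < min m (Suc n)"
    then show "0 \<le> s i" using sig0 d'(3) mn by (cases i) (auto simp: s_def)
  next
    fix i j assume ij: "i \<le> j \<and> j < min m (Suc n)"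
    show "s j \<le> s i"
    proof (cases j)
      case 0 then show ?thesis using ij by simp
    next
      case (Suc j')
      show ?thesis
      proof (cases i)
        case 0
        have "s' j' \<le> s' 0" using d'(4)[of 0 j'] ij Suc mn by simp
        also have "s' 0 = s 1" by (simp add: s_def)
        also have "\<dots> \<le> \<sigma>" using s1 ij Suc mn by simp
        finally show ?thesis using 0 Suc by (simp add: s_def)
      next
        case (Suc i')
        then show ?thesis using d'(4)[of i' j'] ij \<open>j = Suc j'\<close> mn by (simp add: s_def)
      qed
    qed
  next
    fix i assume "min m (Suc n) \<le> i"
    then show "s i = 0" using d'(5) mn by (cases i) (auto simp: s_def)
  qed
  then show ?case by blast
qed



lemma fip_udv_self:
  assumes "n \<le> m" "qunitary m U" "qunitary n V" "Y = qmult n (qmult m U (qdiag m n a)) (qadj V)"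
  shows "fip m n Y Y = (\<Sum>k<n. (a k)\<^sup>2)"
proof -
  have "fip m n Y Y = (\<Sum>k<n. \<Sum>l<n. a k * a l *
           qre (qmult m (qadj U) U k l * qmult n (qadj V) V l k))"
    by (rule fip_svd_eq[OF assms(1-3) assms(2,3) assms(4) assms(4)])
  also have "\<dots> = (\<Sum>k<n. \<Sum>l<n. a k * a l * (if k = l then 1 else 0))"
    using assms(1-3) unfolding qunitary_def
    by (intro sum.cong refl) (auto simp: qident_def)
  also have "\<dots> = (\<Sum>k<n. (a k)\<^sup>2)"
    by (simp add: if_distrib[where f="\<lambda>x. _ * x"] sum.delta power2_eq_square cong: if_cong)
  finally show ?thesis .
qed

lemma qmat_diff_udv:
  "qmat_diff (qmult k (qmult l U A) W) (qmult k (qmult l U B) W) = qmult k (qmult l U (qmat_diff A B)) W"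
  unfolding qmult_def qmat_diff_def by (auto intro!: ext simp: algebra_simps sum_subtractf)

lemma qmat_diff_qdiag: "qmat_diff (qdiag m n a) (qdiag m n b) = qdiag m n (\<lambda>i. a i - b i)"
  unfolding qmat_diff_def qdiag_def by (auto intro!: ext)

lemma qdiag_cong: "(\<And>i. i < min m n \<Longrightarrow> a i = b i) \<Longrightarrow> qdiag m n a = qdiag m n b"
  unfolding qdiag_def by (auto intro!: ext)

lemma fro_zero:
  assumes "X \<in> qmats m n" "qfro_norm m n X = 0"
  shows "X = (\<lambda>i j. 0)"
proof (intro ext)
  fix i j
  have s: "(\<Sum>i<m. \<Sum>j<n. qnorm2 (X i j)) = 0" using assms(2) unfolding qfro_norm_def
    by (simp add: sum_nonneg)
  show "X i j = 0"
  proof (cases "i < m \<and> j < n")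
    case True
    then have "(\<Sum>j<n. qnorm2 (X i j)) = 0" using s by (simp add: sum_nonneg_eq_0_iff sum_nonneg)
    then show ?thesis using True by (simp add: sum_nonneg_eq_0_iff)
  next
    case False then show ?thesis using assms(1) by (auto simp: qmatsD)
  qed
qed


lemma qsingvals_svd:
  assumes "X \<in> qmats m n" "n \<le> m"
  shows "\<exists>U V. is_qsvd m n X U (qsingvals m n X) V"
proof -
  have "\<exists>s U V. is_qsvd m n X U s V" using svd_exists[OF assms] by blast
  then show ?thesis unfolding qsingvals_def by (rule someI_ex)
qed

theorem theorem3p5:
  fixes m n :: nat and lam :: real and Y U V :: qmat and sY st :: "nat \<Rightarrow> real"
  assumes "n \<le> m"
    and "lam > 0"
    and "is_qsvd m n Y U sY V"
    and "vec_feasible n st"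
    and "\<forall>s. vec_feasible n s \<longrightarrow> vec_obj n lam sY st \<le> vec_obj n lam sY s"
  shows "qmult n (qmult m U (qdiag m n st)) (qadj V) \<in> qmats m n
     \<and> qmult n (qmult m U (qdiag m n st)) (qadj V) \<noteq> (\<lambda>i j. 0)
     \<and> (\<forall>X \<in> qmats m n. X \<noteq> (\<lambda>i j. 0) \<longrightarrow>
          mat_obj m n lam Y (qmult n (qmult m U (qdiag m n st)) (qadj V)) \<le> mat_obj m n lam Y X)"
proof -
  note dY = is_qsvdD[OF assms(3)]
  have mn: "min m n = n" using assms(1) by simp
  define st' where "st' = (\<lambda>i. if i < n then st i else 0)"
  define Xt where "Xt = qmult n (qmult m U (qdiag m n st)) (qadj V)"
  have feas: "\<And>i j. i \<le> j \<Longrightarrow> j < n \<Longrightarrow> st j \<le> st i" "\<And>i. i < n \<Longrightarrow> 0 \<le> st i"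
    "\<exists>i<n. st i \<noteq> 0"
    using assms(4) unfolding vec_feasible_def by auto
  have Xt': "Xt = qmult n (qmult m U (qdiag m n st')) (qadj V)"
    unfolding Xt_def by (subst qdiag_cong[of m n st st']) (auto simp: st'_def mn)
  have svdXt: "is_qsvd m n Xt U st' V"
    unfolding is_qsvd_def using dY(1,2) Xt' feas(1,2) by (auto simp: mn st'_def)
  have XtQ: "Xt \<in> qmats m n"
    unfolding Xt_def
    by (intro qmult_qmats qunitary_qmats dY qdiag_qmats qadj_qmats)
  have sum_st_pos: "0 < (\<Sum>k<n. (st k)\<^sup>2)"
    using feas(3) by (metis (no_types, lifting) finite_lessThan lessThan_iff power2_less_0
      not_less_iff_gr_or_eq sum_pos2 zero_less_power2 order_refl sum_nonneg_eq_0_iff zero_le_power2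
      le_less)
  have froXt: "qfro_norm m n Xt = sqrt (\<Sum>k<n. (st k)\<^sup>2)"
    using fro_svd[OF assms(1) svdXt] by (simp add: st'_def)
  have Xt0: "Xt \<noteq> (\<lambda>i j. 0)"
  proof
    assume "Xt = (\<lambda>i j. 0)"
    then have "qfro_norm m n Xt = 0" unfolding qfro_norm_def by simp
    then show False using froXt sum_st_pos by simp
  qed
  have objXt: "mat_obj m n lam Y Xt = vec_obj n lam sY st"
  proof -
    have "qmat_diff Y Xt = qmult n (qmult m U (qdiag m n (\<lambda>i. sY i - st' i))) (qadj V)"
      using dY(6) Xt' by (simp add: qmat_diff_udv qmat_diff_qdiag)
    then have "(qfro_norm m n (qmat_diff Y Xt))\<^sup>2 = (\<Sum>k<n. (sY k - st' k)\<^sup>2)"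
      using fip_udv_self[OF assms(1) dY(1,2)] fro_sq by simp
    also have "\<dots> = (\<Sum>k<n. (sY k - st k)\<^sup>2)" by (simp add: st'_def)
    finally have 1: "(qfro_norm m n (qmat_diff Y Xt))\<^sup>2 = (\<Sum>k<n. (sY k - st k)\<^sup>2)" .
    obtain U2 V2 where s2: "is_qsvd m n Xt U2 (qsingvals m n Xt) V2"
      using qsingvals_svd[OF XtQ assms(1)] by blast
    have "qnuc_norm m n Xt = (\<Sum>k<n. st' k)"
      unfolding qnuc_norm_def mn using svd_unique[OF assms(1) s2 svdXt] by simp
    also have "\<dots> = (\<Sum>k<n. \<bar>st k\<bar>)" using feas(2) by (simp add: st'_def)
    finally show ?thesis unfolding mat_obj_def vec_obj_def using 1 froXt by simp
  qed
  have main: "mat_obj m n lam Y Xt \<le> mat_obj m n lam Y X"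
    if XQ: "X \<in> qmats m n" and X0: "X \<noteq> (\<lambda>i j. 0)" for X
  proof -
    define b where "b = qsingvals m n X"
    obtain U2 V2 where s2: "is_qsvd m n X U2 b V2"
      using qsingvals_svd[OF XQ assms(1)] unfolding b_def by blast
    note d2 = is_qsvdD[OF s2]
    have froX: "qfro_norm m n X = sqrt (\<Sum>k<n. (b k)\<^sup>2)" by (rule fro_svd[OF assms(1) s2])
    have bfeas: "vec_feasible n b"
    proof -
      have "\<exists>i<n. b i \<noteq> 0"
      proof (rule ccontr)
        assume "\<not> (\<exists>i<n. b i \<noteq> 0)"
        then have "qfro_norm m n X = 0" using froX by simp
        then show False using fro_zero[OF XQ] X0 by simp
      qed
      then show ?thesis unfolding vec_feasible_def using d2(3,4) mn by auto
    qed
    have "vec_obj n lam sY st \<le> vec_obj n lam sY b" using assms(5) bfeas by blast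
    also have "\<dots> \<le> mat_obj m n lam Y X"
    proof -
      have 1: "(\<Sum>k<n. (sY k - b k)\<^sup>2) \<le> (qfro_norm m n (qmat_diff Y X))\<^sup>2"
        by (rule mirsky[OF assms(1,3) s2])
      have 2: "qnuc_norm m n X = (\<Sum>k<n. \<bar>b k\<bar>)"
        unfolding qnuc_norm_def mn b_def[symmetric] using d2(3) mn by simp
      show ?thesis unfolding mat_obj_def vec_obj_def using 1 2 froX by simp
    qed
    finally show ?thesis using objXt by simp
  qed
  show ?thesis using XtQ Xt0 main unfolding Xt_def by blast
qed


end
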